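(* Let $M$ be an $\mathfrak{S}$-module, $\mathfrak{S}=\mathbb{Z}[t]/(t^p-1)$, with $\ker(1-t)=0$. Then $N(t)=0$ on $M$ and $\operatorname{coker}(1-t)$ is a $\mathbb{Z}/p$-vector space. Let $(e_i)_{i\in I}$ be elements of $M$ that represent a $\mathbb{Z}/p$-basis of $\operatorname{coker}(1-t)$. Then the map $\psi\colon\bigoplus_{i\in I}\mathbb{Z}[t]/(N(t))\to M$, $(f_i)_{i\in I}\mapsto\sum_{i\in I}f_i(t)e_i$, is injective, and its cokernel is uniquely $p$-divisible.
   Context: $p$ is a prime and $N(t)=1+t+\dots+t^{p-1}$. Uniquely $p$-divisible means multiplication by $p$ is bijective. *)

theory Defs
  imports "HOL-Computational_Algebra.Polynomial" "HOL-Computational_Algebra.Primes"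
begin

definition zsmult :: "int \<Rightarrow> 'a::ab_group_add \<Rightarrow> 'a" where
  "zsmult k x = (if 0 \<le> k then (\<Sum>i<nat k. x) else - (\<Sum>i<nat (-k). x))"

definition poly_act :: "int poly \<Rightarrow> ('a::ab_group_add \<Rightarrow> 'a) \<Rightarrow> 'a \<Rightarrow> 'a" where
  "poly_act f t x = (\<Sum>k\<le>degree f. zsmult (coeff f k) ((t ^^ k) x))"

definition Npoly :: "nat \<Rightarrow> int poly" where
  "Npoly p = (\<Sum>k<p. monom 1 k)"

text \<open>An S-module, S = Z[t]/(t^p - 1): an abelian group with an additive t, t^p = id.\<close>
definition S_module :: "nat \<Rightarrow> ('a::ab_group_add \<Rightarrow> 'a) \<Rightarrow> bool" where
  "S_module p t \<longleftrightarrow> (\<forall>x y. t (x + y) = t x + t y) \<and> (t ^^ p) = id"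

definition im1t :: "('a::ab_group_add \<Rightarrow> 'a) \<Rightarrow> 'a set" where
  "im1t t = range (\<lambda>y. y - t y)"

end

theory Submission
  imports Defs
begin


definition additive :: "('a::ab_group_add \<Rightarrow> 'a) \<Rightarrow> bool" where
  "additive h \<longleftrightarrow> (\<forall>x y. h (x + y) = h x + h y)"

lemma additive_0: "additive h \<Longrightarrow> h 0 = 0"
  unfolding additive_def by (metis add_cancel_right_right)
lemma additive_neg: "additive h \<Longrightarrow> h (- x) = - h x"
  unfolding additive_def by (metis add_cancel_right_right add.right_inverse eq_neg_iff_add_eq_0)
lemma additive_add: "additive h \<Longrightarrow> h (x + y) = h x + h y"
  unfolding additive_def by blast
lemma additive_diff: "additive h \<Longrightarrow> h (x - y) = h x - h y"
  using additive_add[of h x "-y"] additive_neg[of h y] by simp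
lemma additive_sum: "additive h \<Longrightarrow> h (sum f S) = (\<Sum>i\<in>S. h (f i))"
  by (induction S rule: infinite_finite_induct) (auto simp: additive_0 additive_add)
lemma additive_funpow: "additive t \<Longrightarrow> additive (t ^^ k)"
  by (induction k) (auto simp: additive_def)

lemma zsmult_0[simp]: "zsmult 0 x = 0" by (simp add: zsmult_def)

lemma zsmult_succ: "zsmult (k + 1) x = zsmult k x + x"
proof (cases "k \<ge> 0")
  case True
  then have "nat (k+1) = Suc (nat k)" by simp
  then show ?thesis using True by (simp add: zsmult_def)
next
  case False
  show ?thesis
  proof (cases "k = -1")
    case True then show ?thesis by (simp add: zsmult_def)
  next
    case F2: False
    then have "nat (-k) = Suc (nat (-(k+1)))" using False by simp
    then show ?thesis using False F2 by (simp add: zsmult_def)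
  qed
qed

lemma zsmult_pred: "zsmult (k - 1) x = zsmult k x - x"
  using zsmult_succ[of "k-1" x] by simp

lemma zsmult_add: "zsmult (a + b) x = zsmult a x + zsmult b x"
proof (induction b rule: int_induct[where k=0])
  case base then show ?case by simp
next
  case (step1 i) then show ?case using zsmult_succ[of "a+i" x] zsmult_succ[of i x]
    by (simp add: add.assoc[symmetric])
next
  case (step2 i) then show ?case using zsmult_pred[of "a+i" x] zsmult_pred[of i x]
    by (simp add: diff_add_eq add_diff_eq)
qed

lemma zsmult_1[simp]: "zsmult 1 x = x" using zsmult_succ[of 0 x] by simp

lemma zsmult_uminus: "zsmult (- a) x = - zsmult a x"
  using zsmult_add[of "-a" a x] by (simp add: eq_neg_iff_add_eq_0)

lemma zsmult_mult: "zsmult (a * b) x = zsmult a (zsmult b x)"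
proof (induction a rule: int_induct[where k=0])
  case base then show ?case by simp
next
  case (step1 i) then show ?case
    by (simp add: distrib_right zsmult_add)
next
  case (step2 i)
  have "zsmult (i * b - b) x = zsmult (i*b) x + zsmult (-b) x"
    using zsmult_add[of "i*b" "-b" x] by simp
  then show ?case using step2 by (simp add: left_diff_distrib zsmult_pred zsmult_uminus)
qed

lemma zsmult_hom: "additive h \<Longrightarrow> h (zsmult k x) = zsmult k (h x)"
proof (induction k rule: int_induct[where k=0])
  case base then show ?case by (simp add: additive_0)
next
  case (step1 i) then show ?case by (simp add: zsmult_succ additive_add)
next
  case (step2 i) then show ?case by (simp add: zsmult_pred additive_diff)
qed

lemma additive_zsmult: "additive (zsmult k)"
  unfolding additive_def
proof (induction k rule: int_induct[where k=0])
  case base then show ?case by simp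
next
  case (step1 i) then show ?case by (simp only: zsmult_succ) (simp add: algebra_simps)
next
  case (step2 i) then show ?case by (simp only: zsmult_pred) (simp add: algebra_simps)
qed

lemma zsmult_right_0[simp]: "zsmult k 0 = 0" using additive_0[OF additive_zsmult] .
lemma zsmult_right_add: "zsmult k (x + y) = zsmult k x + zsmult k y"
  using additive_add[OF additive_zsmult] .
lemma zsmult_right_neg: "zsmult k (- y) = - zsmult k y"
  using additive_neg[OF additive_zsmult] .
lemma zsmult_right_diff: "zsmult k (x - y) = zsmult k x - zsmult k y"
  using additive_diff[OF additive_zsmult] .

lemma pa_upto:
  assumes "degree f \<le> n"
  shows "poly_act f t x = (\<Sum>k\<le>n. zsmult (coeff f k) ((t ^^ k) x))"
  unfolding poly_act_def
  by (rule sum.mono_neutral_left) (use assms in \<open>auto simp: coeff_eq_0\<close>)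

lemma pa_zero[simp]: "poly_act 0 t x = 0" by (simp add: poly_act_def)

lemma pa_pCons:
  assumes t: "additive t"
  shows "poly_act (pCons a f) t x = zsmult a x + t (poly_act f t x)"
proof -
  have "poly_act (pCons a f) t x = (\<Sum>k\<le>Suc (degree f). zsmult (coeff (pCons a f) k) ((t ^^ k) x))"
    by (rule pa_upto) (simp add: degree_pCons_le)
  also have "\<dots> = zsmult a x + (\<Sum>k\<le>degree f. zsmult (coeff f k) ((t ^^ Suc k) x))"
    by (subst sum.atMost_Suc_shift) simp
  also have "(\<Sum>k\<le>degree f. zsmult (coeff f k) ((t ^^ Suc k) x)) = t (poly_act f t x)"
    by (simp add: poly_act_def additive_sum[OF t] zsmult_hom[OF t])
  finally show ?thesis .
qed

context fixes t :: "'a::ab_group_add \<Rightarrow> 'a" assumes t: "additive t"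
begin

lemma pa_add_right: "poly_act f t (x + y) = poly_act f t x + poly_act f t y"
  by (induction f) (simp_all add: pa_pCons[OF t] zsmult_right_add additive_add[OF t] algebra_simps)

lemma additive_pa: "additive (poly_act f t)"
  unfolding additive_def by (simp add: pa_add_right)

lemma pa_comm: "poly_act f t (t x) = t (poly_act f t x)"
  by (induction f) (simp_all add: pa_pCons[OF t] zsmult_hom[OF t, symmetric] additive_add[OF t] additive_0[OF t])

lemma pa_add: "poly_act (f + g) t x = poly_act f t x + poly_act g t x"
  by (induction f g rule: poly_induct2) (simp_all add: pa_pCons[OF t] zsmult_add additive_add[OF t] algebra_simps)

lemma pa_smult: "poly_act (smult c f) t x = zsmult c (poly_act f t x)"
  by (induction f) (simp_all add: pa_pCons[OF t] zsmult_mult zsmult_right_add zsmult_hom[OF t])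

lemma pa_neg: "poly_act (- f) t x = - poly_act f t x"
  using pa_add[of f "-f" x] by (simp add: eq_neg_iff_add_eq_0 add.commute)

lemma pa_diff: "poly_act (f - g) t x = poly_act f t x - poly_act g t x"
  using pa_add[of f "-g" x] pa_neg[of g x] by simp

lemma pa_mult: "poly_act (f * g) t x = poly_act f t (poly_act g t x)"
  by (induction f) (simp_all add: pa_pCons[OF t] pa_add pa_smult)

lemma pa_const: "poly_act [:c:] t x = zsmult c x"
  by (simp add: pa_pCons[OF t] additive_0[OF t])

lemma pa_one: "poly_act 1 t x = x"
  using pa_const[of 1 x] by (simp add: one_pCons)

lemma pa_sum_poly: "poly_act (sum F S) t x = (\<Sum>i\<in>S. poly_act (F i) t x)"
  by (induction S rule: infinite_finite_induct) (simp_all add: pa_add)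

lemma pa_sum_right: "poly_act f t (sum F S) = (\<Sum>i\<in>S. poly_act f t (F i))"
  using additive_sum[OF additive_pa] .

lemma pa_monom1: "poly_act (monom 1 k) t x = (t ^^ k) x"
proof (induction k)
  case 0 then show ?case using pa_one by (simp add: one_pCons monom_0)
next
  case (Suc k) then show ?case by (simp add: monom_Suc pa_pCons[OF t])
qed

lemma pa_N: "poly_act (Npoly p) t x = (\<Sum>k<p. (t ^^ k) x)"
  by (simp add: Npoly_def pa_sum_poly pa_monom1)

lemma pa_D: "poly_act [:1,-1:] t x = x - t x"
  by (simp add: pa_pCons[OF t] zsmult_uminus additive_neg[OF t] additive_0[OF t])

lemma pa_key: "\<exists>w. poly_act f t x - zsmult (poly f 1) x = w - t w"
proof -
  have "poly (f - [:poly f 1:]) 1 = 0" by simp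
  then obtain q where q: "f - [:poly f 1:] = [:-1, 1:] * q"
    unfolding poly_eq_0_iff_dvd by auto
  have "f - [:poly f 1:] = [:1,-1:] * (-q)" using q by simp
  then have "poly_act (f - [:poly f 1:]) t x = poly_act [:1,-1:] t (poly_act (-q) t x)"
    by (simp only: pa_mult)
  then show ?thesis by (auto simp: pa_diff pa_const pa_D)
qed

end



lemma coeff_N: "coeff (Npoly p) k = (if k < p then 1 else 0)"
  by (simp add: Npoly_def coeff_sum coeff_monom)

lemma poly_N1: "poly (Npoly p) 1 = int p"
  by (simp add: Npoly_def poly_sum poly_monom)

lemma degree_N: "p \<ge> 1 \<Longrightarrow> degree (Npoly p) = p - 1"
proof (rule antisym)
  assume "p \<ge> 1"
  show "degree (Npoly p) \<le> p - 1" by (rule degree_le) (auto simp add: coeff_N)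
  show "p - 1 \<le> degree (Npoly p)" by (rule le_degree) (use \<open>p \<ge> 1\<close> in \<open>simp add: coeff_N\<close>)
qed

lemma lead_N: "p \<ge> 1 \<Longrightarrow> lead_coeff (Npoly p) = 1"
  by (simp add: degree_N coeff_N)

lemma N_nz: "p \<ge> 1 \<Longrightarrow> Npoly p \<noteq> 0"
  using lead_N by fastforce

lemma P2:
  assumes "int p dvd poly f 1"
  shows "\<exists>g m. f = [:1,-1:] * g + smult m (Npoly p)"
proof -
  obtain m where m: "poly f 1 = int p * m" using assms by blast
  have "poly (f - smult m (Npoly p)) 1 = 0" by (simp add: m poly_N1)
  then obtain q where q: "f - smult m (Npoly p) = [:-1, 1:] * q"
    unfolding poly_eq_0_iff_dvd by auto
  have "f = [:1,-1:] * (-q) + smult m (Npoly p)"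
    using q by (simp add: algebra_simps)
  then show ?thesis by blast
qed

lemma binom_cong:
  assumes "prime p" "i \<le> p - 1"
  shows "int p dvd (int ((p - 1) choose i) * (-1) ^ i - 1)"
  using assms(2)
proof (induction i)
  case 0 then show ?case by simp
next
  case (Suc i)
  have p2: "p \<ge> 2" using assms(1) prime_ge_2_nat by blast
  define A where "A = int ((p - 1) choose i)"
  define B where "B = int ((p - 1) choose Suc i)"
  define C where "C = int (p choose Suc i)"
  have "p choose Suc i = ((p - 1) choose i) + ((p - 1) choose Suc i)"
    using p2 binomial_Suc_Suc[of "p-1" i] by simp
  then have ABC: "C = A + B" by (simp add: A_def B_def C_def)
  have "p dvd (p choose Suc i)"
    using Suc.prems p2 assms(1) by (intro dvd_choose_prime) auto
  then have pC: "int p dvd C" unfolding C_def by (simp add: int_dvd_int_iff)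
  have IH: "int p dvd A * (-1)^i - 1" using Suc A_def by simp
  have "B * (-1) ^ Suc i - 1 = (A * (-1)^i - 1) - C * (-1)^i"
    using ABC by (simp add: algebra_simps)
  also have "int p dvd \<dots>" using IH pC by (simp add: dvd_diff)
  finally show ?case by (simp add: B_def)
qed

lemma int_dvd_map_poly:
  fixes F :: "int poly" and d :: int
  assumes "\<And>k. d dvd coeff F k"
  shows "F = smult d (map_poly (\<lambda>c. c div d) F)"
  by (rule poly_eqI) (use assms in \<open>simp add: coeff_map_poly dvd_mult_div_cancel\<close>)

lemma P3:
  assumes "prime p"
  shows "\<exists>h. [:1,-1:] ^ (p - 1) = Npoly p + smult (int p) h"
proof -
  define F where "F = [:1::int,-1:] ^ (p - 1) - Npoly p"
  have p2: "p \<ge> 2" using assms(1) prime_ge_2_nat by blast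
  have "int p dvd coeff F k" for k
  proof (cases "k \<le> p - 1")
    case True
    then have "coeff F k = int ((p - 1) choose k) * (-1) ^ k - 1"
      using p2 by (simp add: F_def coeff_linear_poly_power coeff_N)
    then show ?thesis using binom_cong[OF assms True] by simp
  next
    case False
    have "degree ([:1::int,-1:] ^ (p - 1)) \<le> p - 1"
      using degree_power_le[of "[:1::int,-1:]" "p-1"] by simp
    then have "coeff F k = 0" using False
      by (simp add: F_def coeff_N coeff_eq_0)
    then show ?thesis by simp
  qed
  then have "F = smult (int p) (map_poly (\<lambda>c. c div int p) F)" by (rule int_dvd_map_poly)
  then show ?thesis unfolding F_def by (metis diff_eq_eq add.commute)
qed

lemma powers_dvd_zero:
  fixes c :: int
  assumes "p \<ge> 2" "\<And>k. int p ^ k dvd c"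
  shows "c = 0"
proof (rule ccontr)
  assume "c \<noteq> 0"
  define k where "k = nat \<bar>c\<bar>"
  have "\<bar>int p ^ k\<bar> \<le> \<bar>c\<bar>" using dvd_imp_le_int[OF \<open>c \<noteq> 0\<close> assms(2)[of k]] .
  moreover have "k < 2 ^ k" by (rule less_exp)
  moreover have "(2::nat) ^ k \<le> p ^ k" using assms(1) by (simp add: power_mono)
  ultimately show False unfolding k_def
    by (smt (verit) of_nat_less_iff of_nat_le_iff of_nat_power int_nat_eq abs_ge_zero power_abs)
qed

lemma P4:
  assumes p2: "p \<ge> 2"
    and H: "\<And>k. \<exists>a b. f = Npoly p * a + smult (int p ^ k) b"
  shows "Npoly p dvd f"
proof -
  define N where "N = Npoly p"
  have N0: "N \<noteq> 0" and lc: "lead_coeff N = 1" and dN: "degree N = p - 1"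
    using N_nz lead_N degree_N p2 by (auto simp: N_def)
  obtain q r where qr: "pseudo_divmod f N = (q, r)" by (cases "pseudo_divmod f N") auto
  from pseudo_divmod[OF N0 qr] lc have fqr: "f = N * q + r" and rdeg: "r = 0 \<or> degree r < degree N"
    by auto
  have rsmall: "degree r \<le> p - 2" using rdeg dN p2 by auto
  have "int p ^ k dvd coeff r j" for k j
  proof -
    obtain a b where ab: "f = N * a + smult (int p ^ k) b" using H[of k] N_def by blast
    obtain q' r' where qr': "pseudo_divmod b N = (q', r')" by (cases "pseudo_divmod b N") auto
    from pseudo_divmod[OF N0 qr'] lc have bqr: "b = N * q' + r'" and rdeg': "r' = 0 \<or> degree r' < degree N"
      by auto
    have rsmall': "degree r' \<le> p - 2" using rdeg' dN p2 by auto
    have eq: "r - smult (int p ^ k) r' = N * (a + smult (int p ^ k) q' - q)"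
      using fqr ab bqr by (simp add: algebra_simps smult_add_right)
    have dl: "degree (r - smult (int p ^ k) r') \<le> p - 2"
      using rsmall rsmall' degree_smult_le[of "int p ^ k" r']
      by (intro degree_diff_le) auto
    have "a + smult (int p ^ k) q' - q = 0"
    proof (rule ccontr)
      assume nz: "a + smult (int p ^ k) q' - q \<noteq> 0"
      have "degree (N * (a + smult (int p ^ k) q' - q)) \<ge> p - 1"
        using degree_mult_eq[OF N0 nz] dN by simp
      then show False using dl eq p2 by simp
    qed
    then have "r = smult (int p ^ k) r'" using eq by simp
    then show ?thesis by (simp add: coeff_smult)
  qed
  then have "r = 0" using powers_dvd_zero[OF p2] by (simp add: poly_eq_iff)
  then show ?thesis using fqr N_def by simp
qed



definition Psi :: "('a::ab_group_add \<Rightarrow> 'a) \<Rightarrow> ('i \<Rightarrow> 'a) \<Rightarrow> ('i \<Rightarrow> int poly) \<Rightarrow> 'a" where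
  "Psi t e f = (\<Sum>i\<in>{i. f i \<noteq> 0}. poly_act (f i) t (e i))"

definition adm :: "'i set \<Rightarrow> ('i \<Rightarrow> 'b::zero) \<Rightarrow> bool" where
  "adm I f \<longleftrightarrow> finite {i. f i \<noteq> 0} \<and> {i. f i \<noteq> 0} \<subseteq> I"

locale setting =
  fixes p :: nat and t :: "'a::ab_group_add \<Rightarrow> 'a"
    and I :: "'i set" and e :: "'i \<Rightarrow> 'a"
  assumes prime: "prime p"
    and Sm: "S_module p t"
    and ker: "\<And>x. x - t x = 0 \<Longrightarrow> x = 0"
    and span: "\<forall>x. \<exists>c :: 'i \<Rightarrow> int. finite {i. c i \<noteq> 0} \<and> {i. c i \<noteq> 0} \<subseteq> I \<and>
                 x - (\<Sum>i\<in>{i. c i \<noteq> 0}. zsmult (c i) (e i)) \<in> im1t t"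
    and indep: "\<forall>c :: 'i \<Rightarrow> int. finite {i. c i \<noteq> 0} \<and> {i. c i \<noteq> 0} \<subseteq> I \<and>
                 (\<Sum>i\<in>{i. c i \<noteq> 0}. zsmult (c i) (e i)) \<in> im1t t
                 \<longrightarrow> (\<forall>i\<in>I. int p dvd c i)"
begin

abbreviation "D \<equiv> [:1::int, -1:]"
abbreviation "N \<equiv> Npoly p"
abbreviation "R \<equiv> {Psi t e f | f. adm I f}"

lemma tadd: "additive t" using Sm by (simp add: S_module_def additive_def)
lemma tp: "(t ^^ p) = id" using Sm by (simp add: S_module_def)
lemma p2: "p \<ge> 2" using prime prime_ge_2_nat by blast

lemma im_iff: "x \<in> im1t t \<longleftrightarrow> (\<exists>y. x = y - t y)"
  by (auto simp: im1t_def)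
lemma im_0: "0 \<in> im1t t" unfolding im_iff by (rule exI[of _ 0]) (simp add: additive_0[OF tadd])
lemma im_add: "x \<in> im1t t \<Longrightarrow> y \<in> im1t t \<Longrightarrow> x + y \<in> im1t t"
  unfolding im_iff proof (elim exE)
  fix a b assume "x = a - t a" "y = b - t b"
  then show "\<exists>c. x + y = c - t c" by (intro exI[of _ "a+b"]) (simp add: additive_add[OF tadd])
qed
lemma im_neg: "x \<in> im1t t \<Longrightarrow> - x \<in> im1t t"
  unfolding im_iff proof (elim exE)
  fix a assume "x = a - t a"
  then show "\<exists>c. - x = c - t c" by (intro exI[of _ "-a"]) (simp add: additive_neg[OF tadd])
qed
lemma im_diff: "x \<in> im1t t \<Longrightarrow> y \<in> im1t t \<Longrightarrow> x - y \<in> im1t t"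
  using im_add[OF _ im_neg, of x y] by simp
lemma im_sum: "(\<And>i. i \<in> S \<Longrightarrow> F i \<in> im1t t) \<Longrightarrow> sum F S \<in> im1t t"
  by (induction S rule: infinite_finite_induct) (auto simp: im_0 im_add)

lemma N_zero: "(\<Sum>k<p. (t ^^ k) x) = 0"
proof -
  let ?s = "\<Sum>k<p. (t ^^ k) x"
  have "t ?s = (\<Sum>k<p. (t ^^ Suc k) x)" by (simp add: additive_sum[OF tadd])
  then have "?s - t ?s = (\<Sum>k<p. (t ^^ k) x - (t ^^ Suc k) x)" by (simp add: sum_subtractf)
  also have "\<dots> = (t ^^ 0) x - (t ^^ p) x" by (rule sum_lessThan_telescope')
  also have "\<dots> = 0" using tp by simp
  finally show ?thesis using ker by blast
qed

lemma paN: "poly_act N t x = 0"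
  using pa_N[OF tadd] N_zero by simp

lemma pa_key_im: "poly_act f t x - zsmult (poly f 1) x \<in> im1t t"
  using pa_key[OF tadd, of f x] unfolding im_iff by blast

lemma pmult_im: "zsmult (int p) x \<in> im1t t"
  using im_neg[OF pa_key_im[of N x]] by (simp add: paN poly_N1)

lemma Psi_superset:
  assumes "finite S" "{i. f i \<noteq> 0} \<subseteq> S"
  shows "Psi t e f = (\<Sum>i\<in>S. poly_act (f i) t (e i))"
  unfolding Psi_def by (rule sum.mono_neutral_left) (use assms in auto)

lemma DL:
  assumes af: "adm I f" and z: "Psi t e f = z - t z"
  shows "\<exists>g. adm I g \<and> (\<forall>i. \<exists>m. f i = D * g i + smult m N) \<and> Psi t e g = z"
proof -
  define S where "S = {i. f i \<noteq> 0}"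
  have fS: "finite S" and SI: "S \<subseteq> I" using af by (auto simp: adm_def S_def)
  define c where "c i = poly (f i) 1" for i
  have cS: "{i. c i \<noteq> 0} \<subseteq> S" by (auto simp: c_def S_def)
  have csum: "(\<Sum>i\<in>{i. c i \<noteq> 0}. zsmult (c i) (e i)) = (\<Sum>i\<in>S. zsmult (c i) (e i))"
    by (rule sum.mono_neutral_left) (use fS cS in auto)
  have "Psi t e f - (\<Sum>i\<in>S. zsmult (c i) (e i)) = (\<Sum>i\<in>S. poly_act (f i) t (e i) - zsmult (c i) (e i))"
    by (simp add: Psi_def S_def sum_subtractf)
  also have "\<dots> \<in> im1t t" by (rule im_sum) (simp add: c_def pa_key_im)
  finally have d1: "Psi t e f - (\<Sum>i\<in>S. zsmult (c i) (e i)) \<in> im1t t" .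
  have "Psi t e f \<in> im1t t" using z unfolding im_iff by blast
  from im_diff[OF this d1] have "(\<Sum>i\<in>S. zsmult (c i) (e i)) \<in> im1t t" by simp
  then have "(\<Sum>i\<in>{i. c i \<noteq> 0}. zsmult (c i) (e i)) \<in> im1t t" using csum by simp
  moreover have "finite {i. c i \<noteq> 0}" using fS cS finite_subset by blast
  moreover have "{i. c i \<noteq> 0} \<subseteq> I" using cS SI by blast
  ultimately have cdvd: "\<forall>i\<in>I. int p dvd c i"
    using indep by blast
  have "\<forall>i. \<exists>gi m. (f i = 0 \<longrightarrow> gi = 0) \<and> f i = D * gi + smult m N"
  proof
    fix i show "\<exists>gi m. (f i = 0 \<longrightarrow> gi = 0) \<and> f i = D * gi + smult m N"
    proof (cases "f i = 0")
      case True then show ?thesis by (intro exI[of _ 0]) simp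
    next
      case False
      then have "i \<in> I" using SI S_def by auto
      then have "int p dvd poly (f i) 1" using cdvd c_def by simp
      then obtain gi m where "f i = D * gi + smult m N" using P2 by blast
    then show ?thesis using False by blast
    qed
  qed
  then obtain g where "\<forall>i. \<exists>m. (f i = 0 \<longrightarrow> g i = 0) \<and> f i = D * g i + smult m N"
    by (rule choice[THEN exE]) blast
  then obtain m where gm: "\<And>i. (f i = 0 \<longrightarrow> g i = 0) \<and> f i = D * g i + smult (m i) N"
    by (rule choice[THEN exE]) blast
  have gS: "{i. g i \<noteq> 0} \<subseteq> S" using gm unfolding S_def by blast
  have ag: "adm I g" using gS fS SI by (auto simp: adm_def intro: finite_subset)
  define G where "G = (\<Sum>i\<in>S. poly_act (g i) t (e i))"
  have "Psi t e f = (\<Sum>i\<in>S. poly_act (g i) t (e i) - t (poly_act (g i) t (e i)))"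
    unfolding Psi_def S_def[symmetric]
  proof (rule sum.cong[OF refl])
    fix i assume "i \<in> S"
    have fi: "f i = D * g i + smult (m i) N" using gm by blast
    have "poly_act (f i) t (e i) = poly_act (D * g i + smult (m i) N) t (e i)" by (simp only: fi)
    also have "\<dots> = poly_act (g i) t (e i) - t (poly_act (g i) t (e i))"
      by (simp only: pa_add[OF tadd] pa_mult[OF tadd] pa_smult[OF tadd] pa_D[OF tadd] paN zsmult_right_0) simp
    finally show "poly_act (f i) t (e i) = poly_act (g i) t (e i) - t (poly_act (g i) t (e i))" .
  qed
  also have "\<dots> = G - t G" by (simp add: G_def sum_subtractf additive_sum[OF tadd])
  finally have "z - t z = G - t G" using z by simp
  then have "(z - G) - t (z - G) = 0" by (simp add: additive_diff[OF tadd] algebra_simps)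
  then have "z - G = 0" by (rule ker)
  then have "z = G" by simp
  moreover have "Psi t e g = G" unfolding G_def by (rule Psi_superset[OF fS gS])
  ultimately show ?thesis using ag gm by blast
qed

lemma part3_k:
  "\<forall>f. adm I f \<and> Psi t e f = 0 \<longrightarrow> (\<forall>i. \<exists>a b. f i = N * a + D ^ k * b)"
proof (induction k)
  case 0 show ?case
  proof (intro allI impI)
    fix f :: "'i \<Rightarrow> int poly" and i
    show "\<exists>a b. f i = N * a + D ^ 0 * b" by (rule exI[of _ 0], rule exI[of _ "f i"]) simp
  qed
next
  case (Suc k)
  show ?case
  proof (intro allI impI)
    fix f i assume f: "adm I f \<and> Psi t e f = 0"
    then have "Psi t e f = 0 - t 0" by (simp add: additive_0[OF tadd])
    then obtain g where g: "adm I g" "\<forall>i. \<exists>m. f i = D * g i + smult m N" "Psi t e g = 0"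
      using DL f by blast
    obtain a b where ab: "g i = N * a + D ^ k * b" using Suc g by blast
    obtain m where m: "f i = D * g i + smult m N" using g by blast
    have "f i = N * (D * a + [:m:]) + D ^ Suc k * b"
      using m ab by (simp add: algebra_simps)
    then show "\<exists>a b. f i = N * a + D ^ Suc k * b" by blast
  qed
qed

lemma U_pow:
  obtains h where "D ^ (p - 1) = N + smult (int p) h"
  using P3[OF prime] by blast

lemma U_pow_k: "\<exists>a b. (D ^ (p - 1)) ^ k = N * a + smult (int p ^ k) b"
proof (induction k)
  case 0 then show ?case by (intro exI[of _ 0] exI[of _ 1]) simp
next
  case (Suc k)
  obtain h where h: "D ^ (p - 1) = N + smult (int p) h" by (rule U_pow)
  obtain a b where ab: "(D ^ (p - 1)) ^ k = N * a + smult (int p ^ k) b" using Suc by blast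
  have "(D ^ (p - 1)) ^ Suc k = (N + smult (int p) h) * (N * a + smult (int p ^ k) b)"
    using h ab by simp
  also have "\<dots> = N * (N * a + smult (int p ^ k) b + smult (int p) (h * a)) + smult (int p ^ Suc k) (h * b)"
    by (simp add: algebra_simps smult_add_right mult_smult_left mult_smult_right)
  finally show ?case by blast
qed

lemma part3:
  assumes "adm I f" "Psi t e f = 0"
  shows "N dvd f i"
proof (rule P4[OF p2])
  fix k
  obtain a b where ab: "f i = N * a + D ^ ((p - 1) * k) * b" using part3_k assms by blast
  obtain a' b' where ab': "(D ^ (p - 1)) ^ k = N * a' + smult (int p ^ k) b'" using U_pow_k by blast
  have "f i = N * a + (N * a' + smult (int p ^ k) b') * b"
    using ab ab' by (simp only: power_mult)
  then have "f i = N * (a + a' * b) + smult (int p ^ k) (b' * b)"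
    by (simp add: algebra_simps mult_smult_left)
  then show "\<exists>a b. f i = N * a + smult (int p ^ k) b" by blast
qed

lemma Rmem: "adm I f \<Longrightarrow> Psi t e f = x \<Longrightarrow> x \<in> R" by blast

lemma R0: "0 \<in> R"
proof -
  have "adm I (\<lambda>_. 0::int poly)" by (simp add: adm_def)
  moreover have "Psi t e (\<lambda>_. 0::int poly) = 0" by (simp add: Psi_def)
  ultimately show ?thesis by (rule Rmem)
qed

lemma Radd:
  assumes "x \<in> R" "y \<in> R" shows "x + y \<in> R"
proof -
  obtain f g where f: "adm I f" "x = Psi t e f" and g: "adm I g" "y = Psi t e g" using assms by blast
  define S where "S = {i. f i \<noteq> 0} \<union> {i. g i \<noteq> 0}"
  have fS: "finite S" using f g by (simp add: S_def adm_def)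
  have sub: "{i. f i + g i \<noteq> 0} \<subseteq> S" by (auto simp: S_def)
  have a: "adm I (\<lambda>i. f i + g i)" using f g fS finite_subset[OF sub fS] sub unfolding adm_def S_def
    by auto
  have "Psi t e (\<lambda>i. f i + g i) = (\<Sum>i\<in>S. poly_act (f i + g i) t (e i))"
    by (rule Psi_superset[OF fS]) (auto simp: S_def)
  also have "\<dots> = (\<Sum>i\<in>S. poly_act (f i) t (e i)) + (\<Sum>i\<in>S. poly_act (g i) t (e i))"
    by (simp add: pa_add[OF tadd] sum.distrib)
  also have "\<dots> = x + y"
  proof -
    have "Psi t e f = (\<Sum>i\<in>S. poly_act (f i) t (e i))" by (rule Psi_superset[OF fS]) (auto simp: S_def)
    moreover have "Psi t e g = (\<Sum>i\<in>S. poly_act (g i) t (e i))" by (rule Psi_superset[OF fS]) (auto simp: S_def)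
    ultimately show ?thesis using f g by simp
  qed
  finally show ?thesis using a by (rule Rmem[rotated])
qed

lemma Rpa:
  assumes "x \<in> R" shows "poly_act h t x \<in> R"
proof -
  obtain f where f: "adm I f" "x = Psi t e f" using assms by blast
  define S where "S = {i. f i \<noteq> 0}"
  have fS: "finite S" using f by (simp add: S_def adm_def)
  have a: "adm I (\<lambda>i. h * f i)" using f fS unfolding adm_def S_def
    by (auto intro: finite_subset[of _ S])
  have "Psi t e (\<lambda>i. h * f i) = (\<Sum>i\<in>S. poly_act (h * f i) t (e i))"
    by (rule Psi_superset[OF fS]) (auto simp: S_def)
  also have "\<dots> = poly_act h t x"
    by (simp add: pa_mult[OF tadd] f Psi_def S_def pa_sum_right[OF tadd])
  finally show ?thesis using a by (rule Rmem[rotated])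
qed

lemma Rspan:
  assumes "finite {i. c i \<noteq> 0}" "{i. c i \<noteq> 0} \<subseteq> I"
  shows "(\<Sum>i\<in>{i. c i \<noteq> 0}. zsmult (c i) (e i)) \<in> R"
proof -
  have eq: "{i. [:c i:] \<noteq> 0} = {i. c i \<noteq> 0}" by simp
  have a: "adm I (\<lambda>i. [:c i:])" using assms by (simp add: adm_def)
  have "Psi t e (\<lambda>i. [:c i:]) = (\<Sum>i\<in>{i. c i \<noteq> 0}. zsmult (c i) (e i))"
    unfolding Psi_def eq by (simp add: pa_const[OF tadd])
  then show ?thesis using a by (rule Rmem[rotated])
qed

lemma part4a_n: "\<exists>r y. r \<in> R \<and> x = r + poly_act (D ^ n) t y"
proof (induction n arbitrary: x)
  case 0 then show ?case using R0 by (intro exI[of _ 0] exI[of _ x]) (simp add: pa_one[OF tadd])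
next
  case (Suc n)
  obtain r y where ry: "r \<in> R" "x = r + poly_act (D ^ n) t y" using Suc by blast
  obtain c where c: "finite {i. c i \<noteq> 0}" "{i. c i \<noteq> 0} \<subseteq> I"
    "y - (\<Sum>i\<in>{i. c i \<noteq> 0}. zsmult (c i) (e i)) \<in> im1t t" using span by blast
  define s where "s = (\<Sum>i\<in>{i. c i \<noteq> 0}. zsmult (c i) (e i))"
  obtain u where u: "y - s = u - t u" using c(3) unfolding im_iff s_def by blast
  have "y = s + poly_act D t u" using u by (simp add: pa_D[OF tadd] algebra_simps)
  then have "poly_act (D ^ n) t y = poly_act (D ^ n) t s + poly_act (D ^ n) t (poly_act D t u)"
    by (simp only: pa_add_right[OF tadd])
  moreover have "poly_act (D ^ Suc n) t u = poly_act (D ^ n) t (poly_act D t u)"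
    by (simp only: power_Suc2 pa_mult[OF tadd])
  ultimately have "poly_act (D ^ n) t y = poly_act (D ^ n) t s + poly_act (D ^ Suc n) t u"
    by simp
  then have "x = (r + poly_act (D ^ n) t s) + poly_act (D ^ Suc n) t u" using ry by (simp add: add.assoc)
  moreover have "r + poly_act (D ^ n) t s \<in> R"
    using Radd[OF ry(1) Rpa[OF Rspan[OF c(1,2)]]] s_def by simp
  ultimately show ?case by blast
qed

lemma part4a: "\<exists>y. x - zsmult (int p) y \<in> R"
proof -
  obtain r y where ry: "r \<in> R" "x = r + poly_act (D ^ (p - 1)) t y" using part4a_n by blast
  obtain h where h: "D ^ (p - 1) = N + smult (int p) h" by (rule U_pow)
  have "poly_act (D ^ (p - 1)) t y = zsmult (int p) (poly_act h t y)"
    by (simp only: h pa_add[OF tadd] pa_smult[OF tadd] paN) simp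
  then have "x - zsmult (int p) (poly_act h t y) = r" using ry by simp
  then show ?thesis using ry(1) by (intro exI[of _ "poly_act h t y"]) simp
qed

lemma INJ: assumes "poly_act D t y \<in> R" shows "y \<in> R"
proof -
  obtain f where f: "adm I f" "poly_act D t y = Psi t e f" using assms by blast
  then have "Psi t e f = y - t y" by (simp add: pa_D[OF tadd])
  from DL[OF f(1) this] obtain g where "adm I g" "Psi t e g = y" by blast
  then show ?thesis by (rule Rmem)
qed

lemma INJ_n: "poly_act (D ^ n) t y \<in> R \<Longrightarrow> y \<in> R"
proof (induction n arbitrary: y)
  case 0 then show ?case by (simp add: pa_one[OF tadd])
next
  case (Suc n)
  have "poly_act (D ^ n) t (poly_act D t y) \<in> R"
    using Suc.prems by (simp only: power_Suc2 pa_mult[OF tadd])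
  then have "poly_act D t y \<in> R" by (rule Suc.IH)
  then show ?case by (rule INJ)
qed

lemma part4b: assumes "zsmult (int p) y \<in> R" shows "y \<in> R"
proof -
  obtain h where h: "D ^ (p - 1) = N + smult (int p) h" by (rule U_pow)
  have "poly_act (D ^ (p - 1)) t y = zsmult (int p) (poly_act h t y)"
    by (simp only: h pa_add[OF tadd] pa_smult[OF tadd] paN) simp
  also have "\<dots> = poly_act h t (zsmult (int p) y)"
    by (rule zsmult_hom[OF additive_pa[OF tadd], symmetric])
  finally have "poly_act (D ^ (p - 1)) t y = poly_act h t (zsmult (int p) y)" .
  then have "poly_act (D ^ (p - 1)) t y \<in> R" using Rpa[OF assms, of h] by (simp only:)
  then show ?thesis by (rule INJ_n)
qed

end

theorem lemma6p7:
  fixes p :: nat and t :: "'a::ab_group_add \<Rightarrow> 'a"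
    and I :: "'i set" and e :: "'i \<Rightarrow> 'a"
  assumes "prime p"
    and "S_module p t"
    and ker: "\<And>x. x - t x = 0 \<Longrightarrow> x = 0"
    and span: "\<forall>x. \<exists>c :: 'i \<Rightarrow> int. finite {i. c i \<noteq> 0} \<and> {i. c i \<noteq> 0} \<subseteq> I \<and>
                 x - (\<Sum>i\<in>{i. c i \<noteq> 0}. zsmult (c i) (e i)) \<in> im1t t"
    and indep: "\<forall>c :: 'i \<Rightarrow> int. finite {i. c i \<noteq> 0} \<and> {i. c i \<noteq> 0} \<subseteq> I \<and>
                 (\<Sum>i\<in>{i. c i \<noteq> 0}. zsmult (c i) (e i)) \<in> im1t t
                 \<longrightarrow> (\<forall>i\<in>I. int p dvd c i)"
  shows "(\<forall>x. (\<Sum>k<p. (t ^^ k) x) = 0)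
    \<and> (\<forall>x. zsmult (int p) x \<in> im1t t)
    \<and> (\<forall>f :: 'i \<Rightarrow> int poly. finite {i. f i \<noteq> 0} \<and> {i. f i \<noteq> 0} \<subseteq> I \<and>
          (\<Sum>i\<in>{i. f i \<noteq> 0}. poly_act (f i) t (e i)) = 0
          \<longrightarrow> (\<forall>i\<in>I. Npoly p dvd f i))
    \<and> (let R = {(\<Sum>i\<in>{i. f i \<noteq> 0}. poly_act (f i) t (e i)) | f :: 'i \<Rightarrow> int poly.
                 finite {i. f i \<noteq> 0} \<and> {i. f i \<noteq> 0} \<subseteq> I}
       in (\<forall>x. \<exists>y. x - zsmult (int p) y \<in> R) \<and>
          (\<forall>y. zsmult (int p) y \<in> R \<longrightarrow> y \<in> R))"
proof -
  interpret S: setting p t I e using assms by unfold_locales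
  have R: "{(\<Sum>i\<in>{i. f i \<noteq> 0}. poly_act (f i) t (e i)) | f :: 'i \<Rightarrow> int poly.
                 finite {i. f i \<noteq> 0} \<and> {i. f i \<noteq> 0} \<subseteq> I} = {Psi t e f | f. adm I f}"
    by (simp add: Psi_def adm_def)
  have c3: "\<forall>f :: 'i \<Rightarrow> int poly. finite {i. f i \<noteq> 0} \<and> {i. f i \<noteq> 0} \<subseteq> I \<and>
          (\<Sum>i\<in>{i. f i \<noteq> 0}. poly_act (f i) t (e i)) = 0
          \<longrightarrow> (\<forall>i\<in>I. Npoly p dvd f i)"
  proof (intro allI impI ballI)
    fix f :: "'i \<Rightarrow> int poly" and i
    assume "finite {i. f i \<noteq> 0} \<and> {i. f i \<noteq> 0} \<subseteq> I \<and>
          (\<Sum>i\<in>{i. f i \<noteq> 0}. poly_act (f i) t (e i)) = 0"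
    then have "adm I f" "Psi t e f = 0" by (simp_all add: adm_def Psi_def)
    then show "Npoly p dvd f i" by (rule S.part3)
  qed
  have c4: "(\<forall>x. \<exists>y. x - zsmult (int p) y \<in> S.R) \<and> (\<forall>y. zsmult (int p) y \<in> S.R \<longrightarrow> y \<in> S.R)"
    using S.part4a S.part4b by blast
  have c1: "\<forall>x. (\<Sum>k<p. (t ^^ k) x) = 0" using S.N_zero by blast
  have c2: "\<forall>x. zsmult (int p) x \<in> im1t t" using S.pmult_im by blast
  have c4': "let R = {(\<Sum>i\<in>{i. f i \<noteq> 0}. poly_act (f i) t (e i)) | f :: 'i \<Rightarrow> int poly.
                 finite {i. f i \<noteq> 0} \<and> {i. f i \<noteq> 0} \<subseteq> I}
       in (\<forall>x. \<exists>y. x - zsmult (int p) y \<in> R) \<and>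
          (\<forall>y. zsmult (int p) y \<in> R \<longrightarrow> y \<in> R)"
    unfolding Let_def R by (rule c4)
  show ?thesis by (rule conjI[OF c1 conjI[OF c2 conjI[OF c3 c4']]])
qed

end
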